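(* Let $V:\mathbb{C}^7\to\mathbb{C}^3\otimes\mathbb{C}^3$ be any isometry whose range is the orthogonal complement of $\operatorname{span}\{\ket{\phi_3^+},\ket{0}\otimes\ket{1}\}$, where $\ket{\phi_3^+}=\frac1{\sqrt3}\sum_{k=0}^2\ket{k}\otimes\ket{k}$, and let $\mathcal{N}_7^V:\mathcal{L}(\mathbb{C}^7)\to\mathcal{L}(\mathbb{C}^3)$ be $\mathcal{N}_7^V(\rho)=\operatorname{Tr}_E(V\rho V^\dagger)$ (trace over the second tensor factor). Then for every $p\in[0,1]$, $M_7(p)\in\mathcal{P}^{7\to7}_{\min}(\mathcal{N}_7^V,V)$, and for every $p\in(0,1]$ and every $\tilde d\le 6$, $M_7(p)\notin\mathcal{P}^{7\to7}(\mathcal{Q}_{\tilde d})$. Consequently $\mathcal{P}^{7\to 7}_{\min}(\mathcal{N}_7^V,V)\not\subseteq\mathcal{P}^{7\to7}(\mathcal{Q}_{\tilde d})$ for all $\tilde d<7$, i.e. minimal environment assistance optimally unlocks the encoding strength of $\mathcal{N}_7^V$.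
   Context: $M_7(p)=\mathbb{I}_5\oplus\begin{pmatrix}p&1-p\\ p/3&1-p/3\end{pmatrix}$ (a $7\times7$ block-diagonal row-stochastic matrix). $\mathcal{P}^{n\to m}(\mathcal{Q}_d)$ is the set of $n\times m$ matrices $P_{ij}=\operatorname{Tr}[\Lambda_j\rho_i]$ with $\rho_i$ density matrices on $\mathbb{C}^d$ and $\{\Lambda_j\}_{j=1}^m$ a POVM on $\mathbb{C}^d$. For a channel $\mathcal{N}$ with isometry $V:\mathbb{C}^{d_A}\to\mathbb{C}^{d_B}\otimes\mathbb{C}^{d_E}$ (first factor receiver $B$, second environment $E$), $\mathcal{N}(\rho)=\operatorname{Tr}_E(V\rho V^\dagger)$, the set $\mathcal{P}^{n\to m}_{\min}(\mathcal{N},V)$ (minimal environment assistance) consists of the $n\times m$ matrices $P_{ij}=\sum_{l,k}q(j\mid l,k)\operatorname{Tr}[(\Lambda^B_l\otimes\Lambda^E_k)V\rho_iV^\dagger]$, where $\rho_i$ are density matrices on $\mathbb{C}^{d_A}$, $\{\Lambda^B_l\}$ and $\{\Lambda^E_k\}$ are finite-outcome POVMs on $\mathbb{C}^{d_B}$ and $\mathbb{C}^{d_E}$, and $q(\cdot\mid l,k)$ is a probability distribution on $\{1,\dots,m\}$ for each $(l,k)$. *)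

theory Defs
  imports Complex_Main "Jordan_Normal_Form.Schur_Decomposition"
begin

(* Conventions: indices are 0-based (row i in {0..<n}, outcome j in {0..<m});
   C^d is carrier_vec d; operators on C^d are complex d x d matrices.
   The tensor product C^dB (x) C^dE is identified with C^(dB*dE) via
   |b> (x) |e>  <->  basis index b*dE + e  (first factor = receiver B). *)

definition mtrace :: "complex mat \<Rightarrow> complex" where
  "mtrace A = (\<Sum>i<dim_row A. A $$ (i, i))"

definition kron :: "complex mat \<Rightarrow> complex mat \<Rightarrow> complex mat" where
  "kron A B = mat (dim_row A * dim_row B) (dim_col A * dim_col B)
     (\<lambda>(i, j). A $$ (i div dim_row B, j div dim_col B) * B $$ (i mod dim_row B, j mod dim_col B))"

definition psd :: "nat \<Rightarrow> complex mat \<Rightarrow> bool" where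
  "psd d A \<longleftrightarrow> A \<in> carrier_mat d d \<and>
     (\<forall>v \<in> carrier_vec d. Im ((A *\<^sub>v v) \<bullet>c v) = 0 \<and> 0 \<le> Re ((A *\<^sub>v v) \<bullet>c v))"

definition density :: "nat \<Rightarrow> complex mat \<Rightarrow> bool" where
  "density d \<rho> \<longleftrightarrow> psd d \<rho> \<and> mtrace \<rho> = 1"

definition povm :: "nat \<Rightarrow> nat \<Rightarrow> (nat \<Rightarrow> complex mat) \<Rightarrow> bool" where
  "povm d m Lam \<longleftrightarrow> (\<forall>j<m. psd d (Lam j)) \<and>
     (\<forall>a<d. \<forall>b<d. (\<Sum>j<m. Lam j $$ (a, b)) = (if a = b then 1 else 0))"

definition P_Q :: "nat \<Rightarrow> nat \<Rightarrow> nat \<Rightarrow> real mat set" where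
  "P_Q n m d = {P. P \<in> carrier_mat n m \<and>
     (\<exists>\<rho> Lam. (\<forall>i<n. density d (\<rho> i)) \<and> povm d m Lam \<and>
        (\<forall>i<n. \<forall>j<m. complex_of_real (P $$ (i, j)) = mtrace (Lam j * \<rho> i)))}"

definition isometry :: "nat \<Rightarrow> nat \<Rightarrow> complex mat \<Rightarrow> bool" where
  "isometry dA dOut V \<longleftrightarrow> V \<in> carrier_mat dOut dA \<and> mat_adjoint V * V = 1\<^sub>m dA"

definition ptrace_E :: "nat \<Rightarrow> nat \<Rightarrow> complex mat \<Rightarrow> complex mat" where
  "ptrace_E dB dE X = mat dB dB (\<lambda>(a, b). \<Sum>k<dE. X $$ (a * dE + k, b * dE + k))"

definition channel :: "nat \<Rightarrow> nat \<Rightarrow> complex mat \<Rightarrow> complex mat \<Rightarrow> complex mat" where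
  "channel dB dE V \<rho> = ptrace_E dB dE (V * \<rho> * mat_adjoint V)"

(* P^{n->m}_min(N, V) for N = channel dB dE V, V : C^dA -> C^dB (x) C^dE *)
definition P_min :: "nat \<Rightarrow> nat \<Rightarrow> nat \<Rightarrow> nat \<Rightarrow> nat \<Rightarrow> complex mat \<Rightarrow> real mat set" where
  "P_min n m dA dB dE V = {P. P \<in> carrier_mat n m \<and>
     (\<exists>\<rho> L K LamB LamE (q :: nat \<Rightarrow> nat \<Rightarrow> nat \<Rightarrow> real).
        (\<forall>i<n. density dA (\<rho> i)) \<and> povm dB L LamB \<and> povm dE K LamE \<and>
        (\<forall>l<L. \<forall>k<K. (\<forall>j<m. 0 \<le> q j l k) \<and> (\<Sum>j<m. q j l k) = 1) \<and>
        (\<forall>i<n. \<forall>j<m. complex_of_real (P $$ (i, j)) =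
           (\<Sum>l<L. \<Sum>k<K. complex_of_real (q j l k) *
              mtrace (kron (LamB l) (LamE k) * V * \<rho> i * mat_adjoint V))))}"

definition M7 :: "real \<Rightarrow> real mat" where
  "M7 p = mat 7 7 (\<lambda>(i, j).
     if i < 5 then (if i = j then 1 else 0)
     else if i = 5 then (if j = 5 then p else if j = 6 then 1 - p else 0)
     else (if j = 5 then p / 3 else if j = 6 then 1 - p / 3 else 0))"

definition phi3plus :: "complex vec" where
  "phi3plus = vec 9 (\<lambda>i. if i div 3 = i mod 3 then complex_of_real (1 / sqrt 3) else 0)"

definition ket01 :: "complex vec" where
  "ket01 = unit_vec 9 (0 * 3 + 1)"

end

theory Submission
  imports Defs
begin


lemma quad_expand:
  assumes "A \<in> carrier_mat d d" "v \<in> carrier_vec d"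
  shows "(A *\<^sub>v v) \<bullet>c v = (\<Sum>i<d. \<Sum>j<d. A$$(i,j) * v$j * cnj (v$i))"
  using assms by (auto simp: scalar_prod_def sum_distrib_right lessThan_atLeast0 row_def intro!: sum.cong)

lemma sum2:
  fixes d :: nat
  assumes "a \<noteq> b" "a < d" "b < d"
  shows "(\<Sum>j<d. g j * (if j = a then \<alpha> else if j = b then \<beta> else 0)) = g a * \<alpha> + g b * (\<beta>::complex)"
proof -
  have "(\<Sum>j<d. g j * (if j = a then \<alpha> else if j = b then \<beta> else 0)) =
    (\<Sum>j<d. (if j = a then g a * \<alpha> else 0) + (if j = b then g b * \<beta> else 0))"
    by (rule sum.cong) (use assms in auto)
  also have "\<dots> = (\<Sum>j<d. (if j = a then g a * \<alpha> else 0)) + (\<Sum>j<d. (if j = b then g b * \<beta> else 0))"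
    by (simp only: sum.distrib)
  also have "\<dots> = g a * \<alpha> + g b * \<beta>" using assms by (simp add: sum.delta)
  finally show ?thesis .
qed

lemma sum1:
  fixes d :: nat
  assumes "a < d"
  shows "(\<Sum>j<d. g j * (if j = a then \<alpha> else 0)) = g a * (\<alpha>::complex)"
proof -
  have "(\<Sum>j<d. g j * (if j = a then \<alpha> else 0)) = (\<Sum>j<d. (if j = a then g a * \<alpha> else 0))"
    by (rule sum.cong) auto
  also have "\<dots> = g a * \<alpha>" using assms by (simp add: sum.delta)
  finally show ?thesis .
qed

lemma quad2:
  fixes A :: "complex mat"
  assumes A: "A \<in> carrier_mat d d" and ab: "a \<noteq> b" "a < d" "b < d"
  shows "(A *\<^sub>v vec d (\<lambda>k. if k = a then \<alpha> else if k = b then \<beta> else 0)) \<bullet>c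
           vec d (\<lambda>k. if k = a then \<alpha> else if k = b then \<beta> else 0)
       = A$$(a,a) * \<alpha> * cnj \<alpha> + A$$(a,b) * \<beta> * cnj \<alpha> + A$$(b,a) * \<alpha> * cnj \<beta> + A$$(b,b) * \<beta> * cnj \<beta>"
proof -
  let ?f = "\<lambda>k. if k = a then \<alpha> else if k = b then \<beta> else 0"
  have "(A *\<^sub>v vec d ?f) \<bullet>c vec d ?f = (\<Sum>i<d. \<Sum>j<d. A$$(i,j) * ?f j * cnj (?f i))"
    using quad_expand[OF A, of "vec d ?f"] by simp
  also have "\<dots> = (\<Sum>i<d. (A$$(i,a) * \<alpha> + A$$(i,b) * \<beta>) * cnj (?f i))"
  proof (rule sum.cong[OF refl])
    fix i
    have "(\<Sum>j<d. A$$(i,j) * ?f j * cnj (?f i)) = (\<Sum>j<d. A$$(i,j) * ?f j) * cnj (?f i)"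
      by (simp add: sum_distrib_right)
    also have "(\<Sum>j<d. A$$(i,j) * ?f j) = A$$(i,a) * \<alpha> + A$$(i,b) * \<beta>"
      using sum2[OF ab, of "\<lambda>j. A$$(i,j)"] by simp
    finally show "(\<Sum>j<d. A$$(i,j) * ?f j * cnj (?f i)) = (A$$(i,a) * \<alpha> + A$$(i,b) * \<beta>) * cnj (?f i)" .
  qed
  also have "\<dots> = (\<Sum>i<d. (A$$(i,a) * \<alpha> + A$$(i,b) * \<beta>) * (if i = a then cnj \<alpha> else if i = b then cnj \<beta> else 0))"
    by (rule sum.cong) auto
  also have "\<dots> = (A$$(a,a) * \<alpha> + A$$(a,b) * \<beta>) * cnj \<alpha> + (A$$(b,a) * \<alpha> + A$$(b,b) * \<beta>) * cnj \<beta>"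
    by (rule sum2[OF ab])
  finally show ?thesis by (simp add: algebra_simps)
qed

lemma quad1:
  fixes A :: "complex mat"
  assumes A: "A \<in> carrier_mat d d" and a: "a < d"
  shows "(A *\<^sub>v vec d (\<lambda>k. if k = a then 1 else 0)) \<bullet>c vec d (\<lambda>k. if k = a then 1 else 0) = A$$(a,a)"
proof -
  let ?f = "\<lambda>k. if k = a then 1 else (0::complex)"
  have "(A *\<^sub>v vec d ?f) \<bullet>c vec d ?f = (\<Sum>i<d. \<Sum>j<d. A$$(i,j) * ?f j * cnj (?f i))"
    using quad_expand[OF A, of "vec d ?f"] by simp
  also have "\<dots> = (\<Sum>i<d. A$$(i,a) * cnj (?f i))"
    by (rule sum.cong[OF refl]) (simp add: sum_distrib_right[symmetric] sum1[OF a, where \<alpha>=1, simplified])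
  also have "\<dots> = (\<Sum>i<d. A$$(i,a) * (if i = a then 1 else 0))"
    by (rule sum.cong) auto
  also have "\<dots> = A$$(a,a)" using sum1[OF a, where \<alpha>=1] by simp
  finally show ?thesis .
qed

lemma psdD:
  assumes "psd d A" "v \<in> carrier_vec d"
  shows "Im ((A *\<^sub>v v) \<bullet>c v) = 0" "0 \<le> Re ((A *\<^sub>v v) \<bullet>c v)"
  using assms unfolding psd_def by auto

lemma psd_diag:
  assumes "psd d A" "a < d"
  shows "Im (A$$(a,a)) = 0 \<and> 0 \<le> Re (A$$(a,a))"
proof -
  have A: "A \<in> carrier_mat d d" using assms unfolding psd_def by auto
  show ?thesis using psdD[OF assms(1) vec_carrier, of "\<lambda>k. if k = a then 1 else 0"]
    unfolding quad1[OF A assms(2)] by simp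
qed

lemma psd_herm:
  assumes "psd d A" "a < d" "b < d"
  shows "A$$(b,a) = cnj (A$$(a,b))"
proof (cases "a = b")
  case True
  then show ?thesis using psd_diag[OF assms(1,2)] by (simp add: complex_eq_iff)
next
  case False
  have A: "A \<in> carrier_mat d d" using assms unfolding psd_def by auto
  have q: "Im ((A *\<^sub>v vec d (\<lambda>k. if k = a then \<alpha> else if k = b then \<beta> else 0)) \<bullet>c
           vec d (\<lambda>k. if k = a then \<alpha> else if k = b then \<beta> else 0)) = 0" for \<alpha> \<beta>
    by (rule psdD[OF assms(1) vec_carrier])
  have 1: "Im (A$$(a,a) + A$$(a,b) + A$$(b,a) + A$$(b,b)) = 0"
    using q[of 1 1] quad2[OF A False assms(2,3), of 1 1] by simp
  have 2: "Im (A$$(a,a) + A$$(a,b) * \<i> - A$$(b,a) * \<i> + A$$(b,b)) = 0"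
    using q[of 1 \<i>] quad2[OF A False assms(2,3), of 1 \<i>] by simp
  have "Im (A$$(a,a)) = 0" "Im (A$$(b,b)) = 0" using psd_diag assms by auto
  with 1 2 show ?thesis by (simp add: complex_eq_iff)
qed

lemma real_quad_aux:
  fixes x y c :: real
  assumes h: "\<And>s. 0 \<le> x*s^2 - 2*s*c + y*c" and "0 \<le> c" "0 \<le> x" "0 \<le> y"
  shows "c \<le> x*y"
proof (cases "c = 0")
  case True then show ?thesis using assms by simp
next
  case False
  then have c: "c > 0" using assms by simp
  show ?thesis
  proof (cases "x = 0")
    case True
    have "0 \<le> x*(y+1)^2 - 2*(y+1)*c + y*c" using h[of "y+1"] by blast
    moreover have "x*(y+1)^2 - 2*(y+1)*c + y*c = - ((y+2)*c)" using True by (simp add: algebra_simps)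
    moreover have "(y+2)*c > 0" using c assms by simp
    ultimately show ?thesis by linarith
  next
    case False
    then have x: "x > 0" using assms by simp
    have "0 \<le> x*(c/x)^2 - 2*(c/x)*c + y*c" using h by blast
    also have "x*(c/x)^2 - 2*(c/x)*c + y*c = (c/x) * (x*y - c)"
      using x by (simp add: power2_eq_square field_simps)
    finally have "0 \<le> (c/x) * (x*y - c)" .
    moreover have "c/x > 0" using c x by simp
    ultimately show ?thesis
    proof (cases "0 \<le> x*y - c")
      case False
      have "(c/x) * (x*y - c) < 0" by (rule mult_pos_neg[OF \<open>c/x > 0\<close>]) (use False in linarith)
      with \<open>0 \<le> (c/x) * (x*y - c)\<close> show ?thesis by linarith
    qed simp
  qed
qed

lemma psd_cs:
  assumes "psd d A" "a < d" "b < d"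
  shows "(cmod (A$$(a,b)))^2 \<le> Re (A$$(a,a)) * Re (A$$(b,b))"
proof (cases "a = b")
  case True
  then show ?thesis using psd_diag[OF assms(1,2)] by (simp add: cmod_def power2_eq_square)
next
  case False
  have A: "A \<in> carrier_mat d d" using assms unfolding psd_def by auto
  have q: "0 \<le> Re ((A *\<^sub>v vec d (\<lambda>k. if k = a then \<alpha> else if k = b then \<beta> else 0)) \<bullet>c
           vec d (\<lambda>k. if k = a then \<alpha> else if k = b then \<beta> else 0))" for \<alpha> \<beta>
    by (rule psdD[OF assms(1) vec_carrier])
  define z where "z = A$$(a,b)"
  have h: "A$$(b,a) = cnj z" using psd_herm[OF assms] z_def by simp
  have da: "Im (A$$(a,a)) = 0" "0 \<le> Re (A$$(a,a))" and db: "Im (A$$(b,b)) = 0" "0 \<le> Re (A$$(b,b))"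
    using psd_diag assms by auto
  have zz: "Re (z * cnj z) = (cmod z)^2" by (simp add: cmod_def power2_eq_square)
  define c where "c = (cmod z)^2"
  have e: "z * cnj z = of_real c" unfolding c_def by (rule complex_norm_square[symmetric])
  have "0 \<le> Re (A$$(a,a)) * s^2 - 2*s*c + Re (A$$(b,b)) * c" for s :: real
  proof -
    have "0 \<le> Re (A$$(a,a) * of_real s * cnj (of_real s) + A$$(a,b) * (- cnj z) * cnj (of_real s)
       + A$$(b,a) * of_real s * cnj (- cnj z) + A$$(b,b) * (- cnj z) * cnj (- cnj z))"
      using q[of "of_real s" "- cnj z"] quad2[OF A False assms(2,3)] by simp
    also have "A$$(a,a) * of_real s * cnj (of_real s) + A$$(a,b) * (- cnj z) * cnj (of_real s)
       + A$$(b,a) * of_real s * cnj (- cnj z) + A$$(b,b) * (- cnj z) * cnj (- cnj z)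
       = A$$(a,a) * of_real (s^2) - 2 * of_real s * (z * cnj z) + A$$(b,b) * (z * cnj z)"
      unfolding h z_def[symmetric] complex_cnj_complex_of_real complex_cnj_minus complex_cnj_cnj
        of_real_power power2_eq_square of_real_mult by (simp add: algebra_simps)
    also have "Re \<dots> = Re (A$$(a,a)) * s^2 - 2*s*c + Re (A$$(b,b)) * c"
      unfolding e using da db by simp
    finally show ?thesis .
  qed
  then have "c \<le> Re (A$$(a,a)) * Re (A$$(b,b))"
    by (intro real_quad_aux) (use da db c_def in auto)
  then show ?thesis unfolding c_def z_def .
qed

lemma amgm_aux:
  fixes \<alpha> \<beta> xa xb ya yb :: real
  assumes "0 \<le> \<alpha>" "0 \<le> \<beta>" "\<alpha>^2 \<le> xa * xb" "\<beta>^2 \<le> yb * ya"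
    "0 \<le> xa" "0 \<le> xb" "0 \<le> ya" "0 \<le> yb"
  shows "\<alpha> * \<beta> \<le> (xa * yb + xb * ya) / 2"
proof -
  have "(\<alpha> * \<beta>)^2 = \<alpha>^2 * \<beta>^2" by (simp add: power_mult_distrib)
  also have "\<dots> \<le> (xa * xb) * (yb * ya)"
    using assms by (intro mult_mono) auto
  also have "\<dots> = (xa * yb) * (xb * ya)" by simp
  also have "\<dots> \<le> ((xa * yb + xb * ya) / 2)^2"
    using sum_squares_ge_zero[of "xa*yb - xb*ya" 0]
    by (simp add: power2_eq_square field_simps)
  finally have "(\<alpha> * \<beta>)^2 \<le> ((xa * yb + xb * ya) / 2)^2" .
  then show ?thesis
    by (rule power2_le_imp_le) (use assms in simp)
qed

lemma mtrace_mult: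
  assumes "A \<in> carrier_mat d d" "B \<in> carrier_mat d d"
  shows "mtrace (A * B) = (\<Sum>a<d. \<Sum>b<d. A$$(a,b) * B$$(b,a))"
  using assms by (auto simp: mtrace_def scalar_prod_def lessThan_atLeast0 intro!: sum.cong)

lemma mtrace_diag: "A \<in> carrier_mat d d \<Longrightarrow> mtrace A = (\<Sum>a<d. A$$(a,a))"
  by (simp add: mtrace_def)

lemma trace_bound:
  assumes A: "psd d A" and B: "psd d B"
  shows "cmod (mtrace (A * B)) \<le> Re (mtrace A) * Re (mtrace B)"
proof -
  have Ac: "A \<in> carrier_mat d d" and Bc: "B \<in> carrier_mat d d" using A B unfolding psd_def by auto
  define x where "x a = Re (A$$(a,a))" for a
  define y where "y a = Re (B$$(a,a))" for a
  have "cmod (mtrace (A * B)) \<le> (\<Sum>a<d. \<Sum>b<d. cmod (A$$(a,b)) * cmod (B$$(b,a)))"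
    unfolding mtrace_mult[OF Ac Bc]
    by (rule order_trans[OF norm_sum sum_mono], rule order_trans[OF norm_sum], simp add: norm_mult)
  also have "\<dots> \<le> (\<Sum>a<d. \<Sum>b<d. (x a * y b + x b * y a) / 2)"
  proof (intro sum_mono)
    fix a b assume a: "a \<in> {..<d}" and b: "b \<in> {..<d}"
    show "cmod (A$$(a,b)) * cmod (B$$(b,a)) \<le> (x a * y b + x b * y a) / 2"
      using psd_cs[OF A, of a b] psd_cs[OF B, of b a] psd_diag[OF A, of a] psd_diag[OF A, of b]
        psd_diag[OF B, of a] psd_diag[OF B, of b] a b unfolding x_def y_def
      by (intro amgm_aux) auto
  qed
  also have "\<dots> = (\<Sum>a<d. \<Sum>b<d. x a * y b)/2 + (\<Sum>a<d. \<Sum>b<d. y a * x b)/2"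
    by (simp add: sum.distrib add_divide_distrib sum_divide_distrib mult.commute)
  also have "\<dots> = (\<Sum>a<d. x a) * (\<Sum>b<d. y b)"
  proof -
    have s1: "(\<Sum>a<d. \<Sum>b<d. x a * y b) = (\<Sum>a<d. x a) * (\<Sum>b<d. y b)" by (rule sum_product[symmetric])
    have s2: "(\<Sum>a<d. \<Sum>b<d. y a * x b) = (\<Sum>a<d. y a) * (\<Sum>b<d. x b)" by (rule sum_product[symmetric])
    show ?thesis unfolding s1 s2 by (simp add: mult.commute)
  qed
  also have "\<dots> = Re (mtrace A) * Re (mtrace B)"
    unfolding mtrace_diag[OF Ac] mtrace_diag[OF Bc] x_def y_def by (simp add: Re_sum)
  finally show ?thesis .
qed

lemma M7_diag:
  "M7 p $$ (0,0) = 1" "M7 p $$ (1,1) = 1" "M7 p $$ (Suc 0, Suc 0) = 1" "M7 p $$ (2,2) = 1" "M7 p $$ (3,3) = 1"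
  "M7 p $$ (4,4) = 1" "M7 p $$ (5,5) = p" "M7 p $$ (6,6) = 1 - p/3"
  by (simp_all add: M7_def)

lemma part2:
  assumes p: "0 < p" and d: "d \<le> 6"
  shows "M7 p \<notin> P_Q 7 7 d"
proof
  assume "M7 p \<in> P_Q 7 7 d"
  then obtain \<rho> Lam where rho: "\<And>i. i < 7 \<Longrightarrow> density d (\<rho> i)" and pv: "povm d 7 Lam"
    and eq: "\<And>i j. i < 7 \<Longrightarrow> j < 7 \<Longrightarrow> complex_of_real (M7 p $$ (i, j)) = mtrace (Lam j * \<rho> i)"
    unfolding P_Q_def by blast
  define t where "t j = Re (mtrace (Lam j))" for j
  have bound: "M7 p $$ (i, j) \<le> t j" if i: "i < 7" and j: "j < 7" for i j
  proof -
    have "M7 p $$ (i, j) = Re (mtrace (Lam j * \<rho> i))" using eq[OF i j] by (metis Re_complex_of_real)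
    also have "\<dots> \<le> cmod (mtrace (Lam j * \<rho> i))" by (rule complex_Re_le_cmod)
    also have "\<dots> \<le> Re (mtrace (Lam j)) * Re (mtrace (\<rho> i))"
      using pv rho[OF i] j unfolding povm_def density_def by (intro trace_bound) auto
    also have "\<dots> = t j" using rho[OF i] unfolding density_def t_def by simp
    finally show ?thesis .
  qed
  have "(\<Sum>j<7. t j) = Re (\<Sum>j<7. \<Sum>a<d. Lam j $$ (a,a))"
    unfolding t_def Re_sum using pv unfolding povm_def psd_def
    by (intro sum.cong refl) (auto simp: mtrace_def)
  also have "(\<Sum>j<7. \<Sum>a<d. Lam j $$ (a,a)) = (\<Sum>a<d. \<Sum>j<7. Lam j $$ (a,a))"
    by (rule sum.swap)
  also have "\<dots> = (\<Sum>a<d. 1)" using pv unfolding povm_def by (intro sum.cong refl) simp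
  finally have tsum: "(\<Sum>j<7. t j) = d" by simp
  have "(\<Sum>j<7. t j) = t 0 + t 1 + t 2 + t 3 + t 4 + t 5 + t 6"
    by (simp add: eval_nat_numeral)
  moreover have "1 \<le> t 0" "1 \<le> t 1" "1 \<le> t 2" "1 \<le> t 3" "1 \<le> t 4" "p \<le> t 5" "1 - p/3 \<le> t 6"
    using bound[of 0 0] bound[of 1 1] bound[of 2 2] bound[of 3 3] bound[of 4 4] bound[of 5 5]
      bound[of 6 6] by (simp_all add: M7_diag)
  moreover have "real d \<le> 6" using d by simp
  ultimately show False using tsum p by linarith
qed



lemma adj_eq: "A \<in> carrier_mat n m \<Longrightarrow> mat_adjoint A = mat m n (\<lambda>(i,j). cnj (A $$ (j,i)))"
  by (auto simp: mat_adjoint_def mat_of_rows_def intro!: eq_matI)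

lemma adj_carrier: fixes A :: "complex mat" assumes "A \<in> carrier_mat n m" shows "mat_adjoint A \<in> carrier_mat m n"
  unfolding adj_eq[OF assms] by simp

lemma adj_inner:
  fixes A :: "complex mat"
  assumes A: "A \<in> carrier_mat n m" and u: "u \<in> carrier_vec m" and w: "w \<in> carrier_vec n"
  shows "(A *\<^sub>v u) \<bullet>c w = u \<bullet>c (mat_adjoint A *\<^sub>v w)"
proof -
  have "(A *\<^sub>v u) \<bullet>c w = (\<Sum>i<n. (\<Sum>j<m. A$$(i,j) * u$j) * cnj (w$i))"
    using A u w by (auto simp: scalar_prod_def lessThan_atLeast0 row_def intro!: sum.cong)
  also have "\<dots> = (\<Sum>i<n. \<Sum>j<m. u$j * (A$$(i,j) * cnj (w$i)))"
    by (simp add: sum_distrib_left sum_distrib_right mult_ac)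
  also have "\<dots> = (\<Sum>j<m. \<Sum>i<n. u$j * (A$$(i,j) * cnj (w$i)))" by (rule sum.swap)
  also have "\<dots> = (\<Sum>j<m. u$j * cnj (\<Sum>i<n. cnj (A$$(i,j)) * w$i))"
    by (simp add: sum_distrib_left)
  also have "\<dots> = u \<bullet>c (mat_adjoint A *\<^sub>v w)"
    using A u w by (auto simp: adj_eq[OF A] scalar_prod_def lessThan_atLeast0 row_def intro!: sum.cong)
  finally show ?thesis .
qed

definition outer :: "complex vec \<Rightarrow> complex mat" where
  "outer x = mat (dim_vec x) (dim_vec x) (\<lambda>(a,b). x$a * cnj (x$b))"

lemma outer_carrier: "x \<in> carrier_vec d \<Longrightarrow> outer x \<in> carrier_mat d d"
  by (simp add: outer_def)

lemma outer_psd: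
  assumes x: "x \<in> carrier_vec d"
  shows "psd d (outer x)"
  unfolding psd_def
proof (intro conjI ballI)
  show "outer x \<in> carrier_mat d d" using x by (simp add: outer_carrier)
  fix v :: "complex vec" assume v: "v \<in> carrier_vec d"
  define s where "s = (\<Sum>i<d. x$i * cnj (v$i))"
  have "(outer x *\<^sub>v v) \<bullet>c v = (\<Sum>i<d. \<Sum>j<d. (x$i * cnj (v$i)) * (cnj (x$j) * v$j))"
    using quad_expand[OF outer_carrier[OF x] v] x by (simp add: outer_def algebra_simps)
  also have "\<dots> = s * cnj s" unfolding s_def by (simp add: sum_product)
  also have "\<dots> = of_real ((cmod s)^2)" by (rule complex_norm_square[symmetric])
  finally have e: "(outer x *\<^sub>v v) \<bullet>c v = of_real ((cmod s)^2)" .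
  show "Im ((outer x *\<^sub>v v) \<bullet>c v) = 0" unfolding e by simp
  show "0 \<le> Re ((outer x *\<^sub>v v) \<bullet>c v)" unfolding e by simp
qed

lemma outer_trace: "mtrace (outer x) = x \<bullet>c x"
  by (simp add: mtrace_def outer_def scalar_prod_def lessThan_atLeast0)

lemma sandwich:
  assumes A: "A \<in> carrier_mat n m" and x: "x \<in> carrier_vec m"
  shows "A * outer x * mat_adjoint A = outer (A *\<^sub>v x)"
proof (rule eq_matI)
  show "dim_row (A * outer x * mat_adjoint A) = dim_row (outer (A *\<^sub>v x))"
    using A by (simp add: outer_def)
  show "dim_col (A * outer x * mat_adjoint A) = dim_col (outer (A *\<^sub>v x))"
    using A by (simp add: outer_def adj_eq[OF A])
  fix i j assume i: "i < dim_row (outer (A *\<^sub>v x))" and j: "j < dim_col (outer (A *\<^sub>v x))"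
  then have i: "i < n" and j: "j < n" using A by (auto simp: outer_def)
  have "(A * outer x * mat_adjoint A) $$ (i,j) = (\<Sum>b<m. (\<Sum>a<m. A$$(i,a) * (x$a * cnj (x$b))) * cnj (A$$(j,b)))"
    using A x i j by (auto simp: adj_eq[OF A] outer_def scalar_prod_def lessThan_atLeast0 row_def col_def intro!: sum.cong)
  also have "\<dots> = (\<Sum>b<m. \<Sum>a<m. (A$$(i,a) * x$a) * (cnj (A$$(j,b)) * cnj (x$b)))"
    by (simp add: sum_distrib_left sum_distrib_right mult_ac)
  also have "\<dots> = (\<Sum>a<m. \<Sum>b<m. (A$$(i,a) * x$a) * (cnj (A$$(j,b)) * cnj (x$b)))"
    by (rule sum.swap)
  also have "\<dots> = (\<Sum>a<m. A$$(i,a) * x$a) * (\<Sum>b<m. cnj (A$$(j,b)) * cnj (x$b))"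
    by (rule sum_product[symmetric])
  also have "\<dots> = (\<Sum>a<m. A$$(i,a) * x$a) * cnj (\<Sum>b<m. A$$(j,b) * x$b)"
    by (simp add: cnj_sum)
  also have "\<dots> = outer (A *\<^sub>v x) $$ (i,j)"
    using A x i j by (auto simp: outer_def scalar_prod_def lessThan_atLeast0 row_def intro!: sum.cong)
  finally show "(A * outer x * mat_adjoint A) $$ (i,j) = outer (A *\<^sub>v x) $$ (i,j)" .
qed

definition Eproj :: "nat \<Rightarrow> nat \<Rightarrow> complex mat" where
  "Eproj n m = mat n n (\<lambda>(i,j). if i = m \<and> j = m then 1 else 0)"

lemma Eproj_outer: "Eproj n m = outer (unit_vec n m)"
  by (auto simp: Eproj_def outer_def unit_vec_def intro!: eq_matI)

lemma trace_proj:
  assumes "m < n" "B \<in> carrier_mat n n"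
  shows "mtrace (Eproj n m * B) = B $$ (m,m)"
proof -
  have "mtrace (Eproj n m * B) = (\<Sum>a<n. \<Sum>b<n. (if a = m \<and> b = m then 1 else 0) * B$$(b,a))"
    using assms mtrace_mult[of "Eproj n m" n B] by (simp add: Eproj_def)
  also have "\<dots> = (\<Sum>a<n. \<Sum>b<n. if b = m then (if a = m then B$$(m,m) else 0) else 0)"
    by (intro sum.cong refl) auto
  also have "\<dots> = B $$ (m,m)" using assms by (simp add: sum.delta)
  finally show ?thesis .
qed

lemma divmod3:
  fixes i l k :: nat
  assumes "k < 3"
  shows "(i div 3 = l \<and> i mod 3 = k) \<longleftrightarrow> i = 3*l+k"
  using assms by presburger

lemma kron_E:
  assumes "l < 3" "k < 3"
  shows "kron (Eproj 3 l) (Eproj 3 k) = Eproj 9 (3*l+k)"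
proof (rule eq_matI)
  fix i j assume "i < dim_row (Eproj 9 (3*l+k))" "j < dim_col (Eproj 9 (3*l+k))"
  then have ij: "i < 9" "j < 9" by (auto simp: Eproj_def)
  then have ij3: "i div 3 < 3" "j div 3 < 3" "i mod 3 < 3" "j mod 3 < 3" by auto
  have "(i div 3 = l \<and> j div 3 = l) \<and> (i mod 3 = k \<and> j mod 3 = k) \<longleftrightarrow> i = 3*l+k \<and> j = 3*l+k"
    using divmod3[OF assms(2), of i l] divmod3[OF assms(2), of j l] by blast
  then show "kron (Eproj 3 l) (Eproj 3 k) $$ (i,j) = Eproj 9 (3*l+k) $$ (i,j)"
    using ij ij3 by (auto simp: kron_def Eproj_def)
qed (auto simp: kron_def Eproj_def)

lemma povm_E: "povm 3 3 (Eproj 3)"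
  unfolding povm_def
proof (intro conjI allI impI)
  fix j :: nat assume "j < 3"
  show "psd 3 (Eproj 3 j)" unfolding Eproj_outer by (rule outer_psd) simp
next
  fix a b :: nat assume "a < 3" "b < 3"
  then show "(\<Sum>j<3. Eproj 3 j $$ (a, b)) = (if a = b then 1 else 0)"
    by (auto simp: Eproj_def eval_nat_numeral)
qed



definition rr :: "nat \<Rightarrow> nat \<Rightarrow> real" where
  "rr i m = (if i = 0 then (if m = 3 then 1 else 0)
    else if i = 1 then (if m = 2 then 1 else 0)
    else if i = 2 then (if m = 5 then 1 else 0)
    else if i = 3 then (if m = 6 then 1 else 0)
    else if i = 4 then (if m = 7 then 1 else 0)
    else if i = 5 then (if m = 0 then sqrt (1/2) else if m = 4 then - sqrt (1/2) else 0)
    else (if m = 0 \<or> m = 4 then sqrt (1/6) else if m = 8 then - 2 * sqrt (1/6) else 0))"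

definition wt :: "nat \<Rightarrow> nat \<Rightarrow> real" where
  "wt i m = (if i = 0 then (if m = 3 then 1 else 0)
    else if i = 1 then (if m = 2 then 1 else 0)
    else if i = 2 then (if m = 5 then 1 else 0)
    else if i = 3 then (if m = 6 then 1 else 0)
    else if i = 4 then (if m = 7 then 1 else 0)
    else if i = 5 then (if m = 0 \<or> m = 4 then 1/2 else 0)
    else (if m = 0 \<or> m = 4 then 1/6 else if m = 8 then 2/3 else 0))"

lemma rr_sq: "(rr i m)^2 = wt i m"
  by (auto simp: rr_def wt_def power_mult_distrib)

definition psi :: "nat \<Rightarrow> complex vec" where
  "psi i = vec 9 (\<lambda>m. complex_of_real (rr i m))"

lemma real_inner:
  "vec n (\<lambda>m. complex_of_real (f m)) \<bullet>c vec n (\<lambda>m. complex_of_real (g m)) = complex_of_real (\<Sum>m<n. f m * g m)"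
  by (simp add: scalar_prod_def lessThan_atLeast0)

lemma phi_real: "phi3plus = vec 9 (\<lambda>m. complex_of_real (if m div 3 = m mod 3 then 1 / sqrt 3 else 0))"
  unfolding phi3plus_def by (intro eq_vecI) auto

lemma ket_real: "ket01 = vec 9 (\<lambda>m. complex_of_real (if m = 1 then 1 else 0))"
  unfolding ket01_def by (intro eq_vecI) auto

lemma sum9: "(\<Sum>m<(9::nat). f m) = f 0 + f 1 + f 2 + f 3 + f 4 + f 5 + f 6 + f 7 + (f 8 :: real)"
  by (simp add: eval_nat_numeral)

lemma lt7: "(i::nat) < 7 \<longleftrightarrow> i = 0 \<or> i = 1 \<or> i = 2 \<or> i = 3 \<or> i = 4 \<or> i = 5 \<or> i = 6"
  by auto

lemma psi_phi: "i < 7 \<Longrightarrow> psi i \<bullet>c phi3plus = 0"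
  unfolding psi_def phi_real real_inner sum9 lt7
  by (auto simp: rr_def)

lemma psi_ket: "i < 7 \<Longrightarrow> psi i \<bullet>c ket01 = 0"
  unfolding psi_def ket_real real_inner sum9 lt7
  by (auto simp: rr_def)

lemma psi_norm: "i < 7 \<Longrightarrow> psi i \<bullet>c psi i = 1"
proof -
  assume i: "i < 7"
  have "psi i \<bullet>c psi i = complex_of_real (\<Sum>m<9. wt i m)"
    unfolding psi_def real_inner by (simp add: rr_sq[symmetric] power2_eq_square)
  also have "(\<Sum>m<9. wt i m) = 1"
    using i unfolding sum9 lt7 by (auto simp: wt_def)
  finally show ?thesis by simp
qed



definition qq :: "real \<Rightarrow> nat \<Rightarrow> nat \<Rightarrow> real" where
  "qq p j m = (if m = 3 then (if j = 0 then 1 else 0)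
    else if m = 2 then (if j = 1 then 1 else 0)
    else if m = 5 then (if j = 2 then 1 else 0)
    else if m = 6 then (if j = 3 then 1 else 0)
    else if m = 7 then (if j = 4 then 1 else 0)
    else if m = 0 \<or> m = 4 then (if j = 5 then p else if j = 6 then 1 - p else 0)
    else if m = 8 then (if j = 6 then 1 else 0)
    else (if j = 0 then 1 else 0))"

lemma sum3: "(\<Sum>l<(3::nat). f l) = f 0 + f 1 + (f 2 :: 'a :: comm_monoid_add)"
  by (simp add: eval_nat_numeral)

lemma sum7: "(\<Sum>l<(7::nat). f l) = f 0 + f 1 + f 2 + f 3 + f 4 + f 5 + (f 6 :: real)"
  by (simp add: eval_nat_numeral)

lemma lt3: "(i::nat) < 3 \<longleftrightarrow> i = 0 \<or> i = 1 \<or> i = 2"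
  by auto

lemma lt9: "(i::nat) < 9 \<longleftrightarrow> i = 0 \<or> i = 1 \<or> i = 2 \<or> i = 3 \<or> i = 4 \<or> i = 5 \<or> i = 6 \<or> i = 7 \<or> i = 8"
  by auto

lemma qq_sum: "m < 9 \<Longrightarrow> (\<Sum>j<7. qq p j m) = 1"
  unfolding sum7 lt9 by (auto simp: qq_def)

lemma qq_nonneg: "0 \<le> p \<Longrightarrow> p \<le> 1 \<Longrightarrow> 0 \<le> qq p j m"
  by (auto simp: qq_def)

lemma entry: "i < 7 \<Longrightarrow> j < 7 \<Longrightarrow> M7 p $$ (i,j) = (\<Sum>l<3. \<Sum>k<3. qq p j (3*l+k) * wt i (3*l+k))"
  unfolding sum3 lt7 by (auto simp: M7_def qq_def wt_def field_simps)



lemma part1: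
  fixes V :: "complex mat"
  assumes iso: "isometry 7 9 V"
    and range: "\<And>w. w \<in> carrier_vec 9 \<Longrightarrow>
        (w \<in> {V *\<^sub>v x | x. x \<in> carrier_vec 7} \<longleftrightarrow> w \<bullet>c phi3plus = 0 \<and> w \<bullet>c ket01 = 0)"
    and p: "0 \<le> p" "p \<le> 1"
  shows "M7 p \<in> P_min 7 7 7 3 3 V"
proof -
  have Vc: "V \<in> carrier_mat 9 7" and VV: "mat_adjoint V * V = 1\<^sub>m 7"
    using iso unfolding isometry_def by auto
  have Va: "mat_adjoint V \<in> carrier_mat 7 9" by (rule adj_carrier[OF Vc])
  have ex: "\<forall>i. \<exists>x. i < 7 \<longrightarrow> x \<in> carrier_vec 7 \<and> V *\<^sub>v x = psi i"
  proof
    fix i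
    show "\<exists>x. i < 7 \<longrightarrow> x \<in> carrier_vec 7 \<and> V *\<^sub>v x = psi i"
    proof (cases "i < 7")
      case True
      have "psi i \<in> carrier_vec 9" by (simp add: psi_def)
      then have "psi i \<in> {V *\<^sub>v x | x. x \<in> carrier_vec 7}"
        using range psi_phi[OF True] psi_ket[OF True] by blast
      then show ?thesis by auto
    qed simp
  qed
  from choice[OF ex] obtain xs where xs: "\<And>i. i < 7 \<Longrightarrow> xs i \<in> carrier_vec 7 \<and> V *\<^sub>v xs i = psi i"
    by blast
  define \<rho> where "\<rho> i = outer (xs i)" for i
  have dens: "density 7 (\<rho> i)" if i: "i < 7" for i
  proof -
    have x: "xs i \<in> carrier_vec 7" and Vx: "V *\<^sub>v xs i = psi i" using xs[OF i] by auto
    have "psi i \<bullet>c psi i = (V *\<^sub>v xs i) \<bullet>c (V *\<^sub>v xs i)" using Vx by simp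
    also have "\<dots> = xs i \<bullet>c (mat_adjoint V *\<^sub>v (V *\<^sub>v xs i))"
      by (rule adj_inner[OF Vc x]) (use Vc x in simp)
    also have "mat_adjoint V *\<^sub>v (V *\<^sub>v xs i) = (mat_adjoint V * V) *\<^sub>v xs i"
      by (rule assoc_mult_mat_vec[symmetric, OF Va Vc x])
    also have "\<dots> = xs i" using x by (simp add: VV)
    finally have "xs i \<bullet>c xs i = 1" using psi_norm[OF i] by simp
    then show ?thesis unfolding density_def \<rho>_def
      using outer_psd[OF x] outer_trace by simp
  qed
  have tr: "mtrace (kron (Eproj 3 l) (Eproj 3 k) * V * \<rho> i * mat_adjoint V) = complex_of_real (wt i (3*l+k))"
    if i: "i < 7" and l: "l < 3" and k: "k < 3" for i l k
  proof -
    have x: "xs i \<in> carrier_vec 7" and Vx: "V *\<^sub>v xs i = psi i" using xs[OF i] by auto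
    define m where "m = 3*l+k"
    have m: "m < 9" using l k unfolding m_def by simp
    have E: "Eproj 9 m \<in> carrier_mat 9 9" by (simp add: Eproj_def)
    have R: "\<rho> i \<in> carrier_mat 7 7" unfolding \<rho>_def by (rule outer_carrier[OF x])
    have VR: "V * \<rho> i \<in> carrier_mat 9 7" using Vc R by simp
    have "kron (Eproj 3 l) (Eproj 3 k) * V * \<rho> i * mat_adjoint V = Eproj 9 m * V * \<rho> i * mat_adjoint V"
      unfolding m_def kron_E[OF l k] ..
    also have "\<dots> = Eproj 9 m * (V * \<rho> i) * mat_adjoint V"
      using assoc_mult_mat[OF E Vc R] by simp
    also have "\<dots> = Eproj 9 m * (V * \<rho> i * mat_adjoint V)"
      by (rule assoc_mult_mat[OF E VR Va])
    also have "V * \<rho> i * mat_adjoint V = outer (psi i)"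
      unfolding \<rho>_def sandwich[OF Vc x] Vx ..
    finally have "mtrace (kron (Eproj 3 l) (Eproj 3 k) * V * \<rho> i * mat_adjoint V) = outer (psi i) $$ (m,m)"
      using trace_proj[OF m outer_carrier[of "psi i" 9]] by (simp add: psi_def)
    also have "\<dots> = complex_of_real (rr i m) * complex_of_real (rr i m)"
      using m by (simp add: outer_def psi_def)
    also have "\<dots> = complex_of_real (wt i m)"
      unfolding rr_sq[symmetric] by (simp add: power2_eq_square)
    finally show ?thesis unfolding m_def .
  qed
  have c1: "M7 p \<in> carrier_mat 7 7" by (simp add: M7_def)
  have c2: "\<forall>i<7. density 7 (\<rho> i)" using dens by blast
  have c4: "\<forall>l<3. \<forall>k<3. (\<forall>j<7. 0 \<le> qq p j (3*l+k)) \<and> (\<Sum>j<7. qq p j (3*l+k)) = 1"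
    using qq_nonneg[OF p] qq_sum by auto
  have c5: "\<forall>i<7. \<forall>j<7. complex_of_real (M7 p $$ (i, j)) = (\<Sum>l<3. \<Sum>k<3. complex_of_real (qq p j (3*l+k)) *
              mtrace (kron (Eproj 3 l) (Eproj 3 k) * V * \<rho> i * mat_adjoint V))"
  proof (intro allI impI)
    fix i j :: nat assume i: "i < 7" and j: "j < 7"
    have "(\<Sum>l<3. \<Sum>k<3. complex_of_real (qq p j (3*l+k)) *
              mtrace (kron (Eproj 3 l) (Eproj 3 k) * V * \<rho> i * mat_adjoint V))
        = (\<Sum>l<3. \<Sum>k<3. complex_of_real (qq p j (3*l+k) * wt i (3*l+k)))"
      using tr[OF i] by (intro sum.cong refl) simp
    also have "\<dots> = complex_of_real (M7 p $$ (i,j))"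
      unfolding entry[OF i j] by simp
    finally show "complex_of_real (M7 p $$ (i, j)) = (\<Sum>l<3. \<Sum>k<3. complex_of_real (qq p j (3*l+k)) *
              mtrace (kron (Eproj 3 l) (Eproj 3 k) * V * \<rho> i * mat_adjoint V))" by simp
  qed
  show ?thesis unfolding P_min_def
    apply (rule CollectI, rule conjI[OF c1])
    apply (rule exI[of _ \<rho>], rule exI[of _ 3], rule exI[of _ 3], rule exI[of _ "Eproj 3"],
        rule exI[of _ "Eproj 3"], rule exI[of _ "\<lambda>j l k. qq p j (3*l+k)"])
    by (intro conjI c2 povm_E c4 c5)
qed


theorem theorem1:
  fixes V :: "complex mat"
  assumes iso: "isometry 7 9 V"
    and range: "\<And>w. w \<in> carrier_vec 9 \<Longrightarrow>
        (w \<in> {V *\<^sub>v x | x. x \<in> carrier_vec 7} \<longleftrightarrow> w \<bullet>c phi3plus = 0 \<and> w \<bullet>c ket01 = 0)"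
  shows "(\<forall>p::real. 0 \<le> p \<and> p \<le> 1 \<longrightarrow> M7 p \<in> P_min 7 7 7 3 3 V)
    \<and> (\<forall>p::real. \<forall>d::nat. 0 < p \<and> p \<le> 1 \<and> d \<le> 6 \<longrightarrow> M7 p \<notin> P_Q 7 7 d)
    \<and> (\<forall>d::nat. d < 7 \<longrightarrow> \<not> P_min 7 7 7 3 3 V \<subseteq> P_Q 7 7 d)"
proof (intro conjI allI impI)
  fix p :: real assume "0 \<le> p \<and> p \<le> 1"
  then show "M7 p \<in> P_min 7 7 7 3 3 V" using part1[OF iso range] by blast
next
  fix p :: real and d :: nat assume "0 < p \<and> p \<le> 1 \<and> d \<le> 6"
  then show "M7 p \<notin> P_Q 7 7 d" using part2 by blast
next
  fix d :: nat assume "d < 7"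
  then have "M7 1 \<notin> P_Q 7 7 d" using part2[of 1 d] by simp
  moreover have "M7 1 \<in> P_min 7 7 7 3 3 V" using part1[OF iso range, of 1] by simp
  ultimately show "\<not> P_min 7 7 7 3 3 V \<subseteq> P_Q 7 7 d" by blast
qed

end
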